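(* Let $\chi$, $A_0$, $\overline{A_0}$ be as in the context with $\inf\chi=c>3/4$. Then for every $u\in\mathcal{D}(\overline{A_0})$, $$\Big(c-\frac34\Big)\Big\|\frac{u}{|x|^2}\Big\|_{L^2(\mathbb{R}^3)}\le\|\overline{A_0}u\|_{L^2(\mathbb{R}^3)}.$$
   Context: $\chi\in C([0,\infty))\cap C^1((0,\infty))$ is non-increasing and bounded; $A_0=-\Delta+\chi(|x|)/|x|^2$ with domain $C_0^\infty(\mathbb{R}^3\setminus\{0\})$; $\overline{A_0}$ is its graph closure in $L^2(\mathbb{R}^3)$: $u\in\mathcal{D}(\overline{A_0})$ iff there are $u_k\in C_0^\infty(\mathbb{R}^3\setminus\{0\})$ and $g\in L^2$ with $u_k\to u$ and $A_0u_k\to g$ in $L^2$, and then $\overline{A_0}u=g$. *)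

theory Defs
  imports "HOL-Analysis.Analysis"
begin

type_synonym R3 = "real ^ 3"

definition pdiff :: "3 \<Rightarrow> (R3 \<Rightarrow> complex) \<Rightarrow> R3 \<Rightarrow> complex" where
  "pdiff i f x = frechet_derivative f (at x) (axis i 1)"

fun iter_pdiff :: "3 list \<Rightarrow> (R3 \<Rightarrow> complex) \<Rightarrow> R3 \<Rightarrow> complex" where
  "iter_pdiff [] f = f"
| "iter_pdiff (i # is) f = pdiff i (iter_pdiff is f)"

definition smooth_R3 :: "(R3 \<Rightarrow> complex) \<Rightarrow> bool" where
  "smooth_R3 f \<longleftrightarrow> (\<forall>is x. iter_pdiff is f differentiable (at x))"

definition test_fun :: "(R3 \<Rightarrow> complex) \<Rightarrow> bool" where
  "test_fun f \<longleftrightarrow> smooth_R3 f \<and>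
     (\<exists>K. compact K \<and> 0 \<notin> K \<and> (\<forall>x. x \<notin> K \<longrightarrow> f x = 0))"

definition laplacian :: "(R3 \<Rightarrow> complex) \<Rightarrow> R3 \<Rightarrow> complex" where
  "laplacian f x = (\<Sum>i\<in>UNIV. pdiff i (pdiff i f) x)"

definition A0 :: "(real \<Rightarrow> real) \<Rightarrow> (R3 \<Rightarrow> complex) \<Rightarrow> R3 \<Rightarrow> complex" where
  "A0 chi f x = - laplacian f x + complex_of_real (chi (norm x) / (norm x)\<^sup>2) * f x"

definition memL2 :: "(R3 \<Rightarrow> complex) \<Rightarrow> bool" where
  "memL2 f \<longleftrightarrow> f \<in> borel_measurable lborel \<and> integrable lborel (\<lambda>x. (norm (f x))\<^sup>2)"

definition L2norm :: "(R3 \<Rightarrow> complex) \<Rightarrow> real" where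
  "L2norm f = sqrt (integral\<^sup>L lborel (\<lambda>x. (norm (f x))\<^sup>2))"

definition L2conv :: "(nat \<Rightarrow> R3 \<Rightarrow> complex) \<Rightarrow> (R3 \<Rightarrow> complex) \<Rightarrow> bool" where
  "L2conv fs f \<longleftrightarrow> memL2 f \<and> (\<forall>k. memL2 (fs k)) \<and>
     ((\<lambda>k. L2norm (\<lambda>x. fs k x - f x)) \<longlonglongrightarrow> 0)"

definition A0_closure_graph :: "(real \<Rightarrow> real) \<Rightarrow> (R3 \<Rightarrow> complex) \<Rightarrow> (R3 \<Rightarrow> complex) \<Rightarrow> bool" where
  "A0_closure_graph chi u g \<longleftrightarrow>
     (\<exists>us. (\<forall>k. test_fun (us k)) \<and> L2conv us u \<and> L2conv (\<lambda>k. A0 chi (us k)) g)"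

end

theory Submission
  imports Defs
begin


lemma test_fun_diff:
  assumes "test_fun f"
  shows "f differentiable (at x)" "pdiff i f differentiable (at x)"
        "pdiff i (pdiff i f) differentiable (at x)"
proof -
  have s: "\<And>is x. iter_pdiff is f differentiable (at x)"
    using assms unfolding test_fun_def smooth_R3_def by blast
  show "f differentiable (at x)" using s[of "[]" x] by simp
  show "pdiff i f differentiable (at x)" using s[of "[i]" x] by simp
  show "pdiff i (pdiff i f) differentiable (at x)" using s[of "[i,i]" x] by simp
qed

lemma pdiff_zero_open:
  assumes "open U" "x \<in> U" "\<And>y. y \<in> U \<Longrightarrow> h y = 0"
  shows "pdiff i h x = 0"
proof -
  have "((\<lambda>_. 0::complex) has_derivative (\<lambda>_. 0)) (at x)" by simp
  then have "(h has_derivative (\<lambda>_. 0)) (at x)"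
    by (rule has_derivative_transform_within_open[OF _ assms(1,2)]) (use assms(3) in auto)
  then have "frechet_derivative h (at x) = (\<lambda>_. 0)" using frechet_derivative_at by metis
  then show ?thesis unfolding pdiff_def by simp
qed

lemma line_deriv:
  fixes h :: "R3 \<Rightarrow> complex"
  assumes "h differentiable (at x)"
  shows "((\<lambda>t. Re (h (x + t *\<^sub>R axis i 1))) has_real_derivative Re (pdiff i h x)) (at 0)"
        "((\<lambda>t. Im (h (x + t *\<^sub>R axis i 1))) has_real_derivative Im (pdiff i h x)) (at 0)"
proof -
  let ?h' = "frechet_derivative h (at x)"
  have hd: "(h has_derivative ?h') (at x)" using assms frechet_derivative_works by blast
  have ld: "((\<lambda>t::real. x + t *\<^sub>R axis i 1) has_derivative (\<lambda>t. t *\<^sub>R axis i 1)) (at 0)"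
    by (auto intro!: derivative_eq_intros)
  have hd0: "(h has_derivative ?h') (at ((\<lambda>t::real. x + t *\<^sub>R axis i 1) 0))" using hd by simp
  have c: "((\<lambda>t. h (x + t *\<^sub>R axis i 1)) has_derivative (\<lambda>t. ?h' (t *\<^sub>R axis i 1))) (at 0)"
    using has_derivative_compose[OF ld hd0] by (simp add: o_def)
  have lin: "linear ?h'" using has_derivative_linear[OF hd] .
  have eq: "\<And>t. ?h' (t *\<^sub>R axis i 1) = t *\<^sub>R ?h' (axis i 1)"
    using lin by (simp add: linear_scale)
  have c2: "((\<lambda>t. h (x + t *\<^sub>R axis i 1)) has_vector_derivative pdiff i h x) (at 0)"
    unfolding has_vector_derivative_def pdiff_def using c eq by simp
  have r: "((\<lambda>t. Re (h (x + t *\<^sub>R axis i 1))) has_derivative (\<lambda>t. Re (t *\<^sub>R pdiff i h x))) (at 0)"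
    using has_derivative_Re[OF c2[unfolded has_vector_derivative_def]] .
  then show "((\<lambda>t. Re (h (x + t *\<^sub>R axis i 1))) has_real_derivative Re (pdiff i h x)) (at 0)"
    by (simp add: has_field_derivative_def mult.commute[of _ "Re (pdiff i h x)"] mult.commute[of _ "Im (pdiff i h x)"])
  have r: "((\<lambda>t. Im (h (x + t *\<^sub>R axis i 1))) has_derivative (\<lambda>t. Im (t *\<^sub>R pdiff i h x))) (at 0)"
    using has_derivative_Im[OF c2[unfolded has_vector_derivative_def]] .
  then show "((\<lambda>t. Im (h (x + t *\<^sub>R axis i 1))) has_real_derivative Im (pdiff i h x)) (at 0)"
    by (simp add: has_field_derivative_def mult.commute[of _ "Re (pdiff i h x)"] mult.commute[of _ "Im (pdiff i h x)"])
qed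



lemma cs_integrable:
  fixes h :: "'a::euclidean_space \<Rightarrow> 'b::{banach, second_countable_topology}"
  assumes "continuous_on UNIV h" "\<And>x. x \<notin> cbox a b \<Longrightarrow> h x = 0"
  shows "integrable lborel h"
proof -
  have "integrable lborel (\<lambda>x. indicator (cbox a b) x *\<^sub>R h x)"
    by (rule borel_integrable_compact) (auto intro: continuous_on_subset[OF assms(1)])
  moreover have "(\<lambda>x. indicator (cbox a b) x *\<^sub>R h x) = h"
    using assms(2) by (auto simp: indicator_def)
  ultimately show ?thesis by simp
qed

lemma box_integral_eq:
  fixes h :: "'a::euclidean_space \<Rightarrow> real"
  assumes "continuous_on UNIV h" "\<And>x. x \<notin> cbox a b \<Longrightarrow> h x = 0"
  shows "integral (cbox a b) h = integral\<^sup>L lborel h"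
proof -
  have "integral (cbox a b) h = integral UNIV (\<lambda>x. if x \<in> cbox a b then h x else 0)"
    by (simp add: integral_restrict_UNIV)
  also have "(\<lambda>x. if x \<in> cbox a b then h x else 0) = h" using assms(2) by auto
  also have "integral UNIV h = integral\<^sup>L lborel h"
    by (rule integral_lborel[OF cs_integrable[OF assms]])
  finally show ?thesis .
qed

lemma lborel_translate:
  fixes h :: "'a::euclidean_space \<Rightarrow> real"
  assumes "continuous_on UNIV h"
  shows "integral\<^sup>L lborel (\<lambda>x. h (x + c)) = integral\<^sup>L lborel h"
proof -
  have m: "h \<in> borel_measurable borel" using borel_measurable_continuous_onI[OF assms] .
  have "integral\<^sup>L lborel h = integral\<^sup>L (distr lborel borel ((+) c)) h"
    by (simp add: lborel_distr_plus)
  also have "\<dots> = integral\<^sup>L lborel (\<lambda>x. h (c + x))"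
    by (rule integral_distr) (auto simp: m)
  finally show ?thesis by (simp add: add.commute)
qed

lemma norm_le_cbox:
  fixes y :: "'a::euclidean_space"
  assumes "norm y \<le> r"
  shows "y \<in> cbox (- r *\<^sub>R One) (r *\<^sub>R One)"
  unfolding mem_box
proof
  fix j :: 'a assume j: "j \<in> Basis"
  have "\<bar>y \<bullet> j\<bar> \<le> norm y" using Basis_le_norm[OF j] .
  then show "(- r *\<^sub>R One) \<bullet> j \<le> y \<bullet> j \<and> y \<bullet> j \<le> (r *\<^sub>R One) \<bullet> j"
    using assms j by auto
qed

lemma IL:
  fixes g D :: "'a::euclidean_space \<Rightarrow> real"
  assumes cD: "continuous_on UNIV D" and cg: "continuous_on UNIV g"
    and sD: "\<And>y. norm y > R \<Longrightarrow> D y = 0" and sg: "\<And>y. norm y > R \<Longrightarrow> g y = 0"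
    and der: "\<And>y. ((\<lambda>t. g (y + t *\<^sub>R e)) has_real_derivative D y) (at 0)"
  shows "integral\<^sup>L lborel D = 0"
proof -
  define r where "r = R + norm e"
  define B where "B = cbox (- r *\<^sub>R One) (r *\<^sub>R One :: 'a)"
  have outB: "D (y + t *\<^sub>R e) = 0 \<and> g (y + t *\<^sub>R e) = 0" if "y \<notin> B" "t \<in> {0..1}" for y t
  proof -
    have "norm y > r" using that(1) norm_le_cbox[of y r] unfolding B_def by force
    moreover have "norm (t *\<^sub>R e) \<le> norm e" using that(2) by (auto simp: mult_left_le_one_le)
    moreover have "norm y \<le> norm (y + t *\<^sub>R e) + norm (t *\<^sub>R e)"
      by (metis add_diff_cancel norm_triangle_ineq4)
    ultimately have "norm (y + t *\<^sub>R e) > R" unfolding r_def by linarith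
    then show ?thesis using sD sg by auto
  qed
  have der2: "((\<lambda>s. g (y + s *\<^sub>R e)) has_real_derivative D (y + t *\<^sub>R e)) (at t)" for y t
  proof -
    have "((\<lambda>s. g ((y + t *\<^sub>R e) + s *\<^sub>R e)) has_real_derivative D (y + t *\<^sub>R e)) (at 0)"
      by (rule der)
    then have "((\<lambda>s. g (y + (s + t) *\<^sub>R e)) has_real_derivative D (y + t *\<^sub>R e)) (at 0)"
      by (simp add: algebra_simps)
    then show ?thesis using DERIV_shift[of "\<lambda>s. g (y + s *\<^sub>R e)" _ 0 t] by simp
  qed
  have ftc: "integral {0..1} (\<lambda>t. D (y + t *\<^sub>R e)) = g (y + e) - g y" for y
  proof -
    have "((\<lambda>t. D (y + t *\<^sub>R e)) has_integral (g (y + 1 *\<^sub>R e) - g (y + 0 *\<^sub>R e))) {0..1}"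
      by (rule fundamental_theorem_of_calculus)
         (auto intro!: DERIV_subset[OF der2] simp: has_real_derivative_iff_has_vector_derivative[symmetric])
    then show ?thesis by (simp add: integral_unique)
  qed
  have cDl: "continuous_on UNIV (\<lambda>(y, t). D (y + t *\<^sub>R e))"
  proof -
    have "continuous_on UNIV (\<lambda>p::'a\<times>real. D (fst p + snd p *\<^sub>R e))"
      by (rule continuous_on_compose2[OF cD]) (auto intro!: continuous_intros)
    then show ?thesis by (simp add: case_prod_unfold)
  qed
  have cgl: "continuous_on UNIV (\<lambda>y. g (y + c))" for c
    by (rule continuous_on_compose2[OF cg]) (auto intro!: continuous_intros)
  have cDl1: "continuous_on UNIV (\<lambda>y. D (y + c))" for c
    by (rule continuous_on_compose2[OF cD]) (auto intro!: continuous_intros)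
  have "integral B (\<lambda>y. integral (cbox 0 1) (\<lambda>t. D (y + t *\<^sub>R e)))
      = integral (cbox 0 1) (\<lambda>t. integral B (\<lambda>y. D (y + t *\<^sub>R e)))"
    unfolding B_def
    by (rule integral_swap_continuous) (rule continuous_on_subset[OF cDl], auto)
  also have "\<dots> = integral (cbox 0 1) (\<lambda>t::real. integral\<^sup>L lborel D)"
  proof -
    have "integral B (\<lambda>y. D (y + t *\<^sub>R e)) = integral\<^sup>L lborel D" if t: "t \<in> cbox 0 1" for t :: real
    proof -
      have "integral B (\<lambda>y. D (y + t *\<^sub>R e)) = integral\<^sup>L lborel (\<lambda>y. D (y + t *\<^sub>R e))"
        unfolding B_def by (rule box_integral_eq[OF cDl1]) (use outB t in \<open>auto simp: B_def\<close>)
      also have "\<dots> = integral\<^sup>L lborel D" by (rule lborel_translate[OF cD])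
      finally show ?thesis .
    qed
    then show ?thesis by (intro Henstock_Kurzweil_Integration.integral_cong) auto
  qed
  also have "\<dots> = integral\<^sup>L lborel D" by simp
  finally have eq1: "integral B (\<lambda>y. integral (cbox 0 1) (\<lambda>t. D (y + t *\<^sub>R e))) = integral\<^sup>L lborel D" .
  have "integral B (\<lambda>y. integral (cbox 0 1) (\<lambda>t. D (y + t *\<^sub>R e)))
      = integral B (\<lambda>y. g (y + e) - g y)"
    using ftc by simp
  also have "\<dots> = integral B (\<lambda>y. g (y + e)) - integral B g"
    unfolding B_def
    by (rule Henstock_Kurzweil_Integration.integral_diff; rule integrable_continuous;
        rule continuous_on_subset[OF cgl[of e]] continuous_on_subset[OF cg]; simp)
  also have "integral B (\<lambda>y. g (y + e)) = integral\<^sup>L lborel (\<lambda>y. g (y + e))"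
    unfolding B_def by (rule box_integral_eq[OF cgl]) (use outB[of _ 1] in \<open>auto simp: B_def\<close>)
  also have "\<dots> = integral\<^sup>L lborel g" by (rule lborel_translate[OF cg])
  also have "integral B g = integral\<^sup>L lborel g"
    unfolding B_def by (rule box_integral_eq[OF cg]) (use outB[of _ 0] in \<open>auto simp: B_def\<close>)
  finally show ?thesis using eq1 by simp
qed



definition Nn :: "R3 \<Rightarrow> real" where "Nn x = (norm x)\<^sup>2"
definition Fq :: "(R3 \<Rightarrow> complex) \<Rightarrow> R3 \<Rightarrow> real" where
  "Fq f x = (Re (f x))\<^sup>2 + (Im (f x))\<^sup>2"
definition Pq :: "(R3 \<Rightarrow> complex) \<Rightarrow> 3 \<Rightarrow> R3 \<Rightarrow> real" where
  "Pq f i x = Re (f x) * Re (pdiff i f x) + Im (f x) * Im (pdiff i f x)"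
definition Gf :: "(R3 \<Rightarrow> complex) \<Rightarrow> 3 \<Rightarrow> R3 \<Rightarrow> real" where
  "Gf f i x = - (1/2) * (x$i) * Fq f x / (Nn x)\<^sup>2 - Pq f i x / Nn x"
definition Df :: "(R3 \<Rightarrow> complex) \<Rightarrow> 3 \<Rightarrow> R3 \<Rightarrow> real" where
  "Df f i x = - (1/2) * Fq f x / (Nn x)\<^sup>2 + (x$i) * Pq f i x / (Nn x)\<^sup>2
     + 2 * (x$i)\<^sup>2 * Fq f x / (Nn x)^3
     - ((Re (pdiff i f x))\<^sup>2 + (Im (pdiff i f x))\<^sup>2) / Nn x
     - (Re (f x) * Re (pdiff i (pdiff i f) x) + Im (f x) * Im (pdiff i (pdiff i f) x)) / Nn x"

lemma Nn_line: "Nn (x + t *\<^sub>R axis i 1) = Nn x + 2 * t * (x$i) + t\<^sup>2"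
  unfolding Nn_def power2_norm_eq_inner
  by (simp add: inner_add_left inner_add_right inner_axis inner_axis' power2_eq_square algebra_simps)

lemma comp_line: "(x + t *\<^sub>R axis i 1) $ i = x $ i + t"
  by (simp add: axis_def)

lemma alg1:
  fixes a b c d q1 q2 xi n :: real
  assumes "n > 0"
  shows "((- ((a\<^sup>2 + b\<^sup>2) / 2) - (2 * (c * a) + 2 * (d * b)) * xi / 2) * n\<^sup>2 +
      2 * (n * (xi * (xi * (a\<^sup>2 + b\<^sup>2))))) / n ^ 4 -
     ((c * c + q1 * a + (d * d + q2 * b)) * n - (a * c + b * d) * (2 * xi)) / (n * n) =
     xi * (a * c + b * d) / n\<^sup>2 - (a\<^sup>2 + b\<^sup>2) / (2 * n\<^sup>2) + 2 * xi\<^sup>2 * (a\<^sup>2 + b\<^sup>2) / n ^ 3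
     - (c\<^sup>2 + d\<^sup>2) / n - (a * q1 + b * q2) / n"
proof -
  have "n \<noteq> 0" using assms by simp
  then show ?thesis by (simp add: field_simps) algebra
qed

lemma G_deriv:
  assumes x: "x \<noteq> 0" and d1: "f differentiable (at x)" and d2: "pdiff i f differentiable (at x)"
  shows "((\<lambda>t. Gf f i (x + t *\<^sub>R axis i 1)) has_real_derivative Df f i x) (at 0)"
proof -
  define A where "A t = Re (f (x + t *\<^sub>R axis i 1))" for t
  define B where "B t = Im (f (x + t *\<^sub>R axis i 1))" for t
  define C where "C t = Re (pdiff i f (x + t *\<^sub>R axis i 1))" for t
  define E where "E t = Im (pdiff i f (x + t *\<^sub>R axis i 1))" for t
  have dA: "(A has_real_derivative Re (pdiff i f x)) (at 0)" unfolding A_def using line_deriv[OF d1] by blast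
  have dB: "(B has_real_derivative Im (pdiff i f x)) (at 0)" unfolding B_def using line_deriv[OF d1] by blast
  have dC: "(C has_real_derivative Re (pdiff i (pdiff i f) x)) (at 0)" unfolding C_def using line_deriv[OF d2] by blast
  have dE: "(E has_real_derivative Im (pdiff i (pdiff i f) x)) (at 0)" unfolding E_def using line_deriv[OF d2] by blast
  have n0: "Nn x > 0" using x unfolding Nn_def by simp
  have eqf: "(\<lambda>t. Gf f i (x + t *\<^sub>R axis i 1)) =
    (\<lambda>t. - (1/2) * (x$i + t) * ((A t)\<^sup>2 + (B t)\<^sup>2) / (Nn x + 2 * t * (x$i) + t\<^sup>2)\<^sup>2
         - (A t * C t + B t * E t) / (Nn x + 2 * t * (x$i) + t\<^sup>2))"
    by (simp add: Gf_def Fq_def Pq_def Nn_line comp_line A_def B_def C_def E_def)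
  have A0: "A 0 = Re (f x)" "B 0 = Im (f x)" "C 0 = Re (pdiff i f x)" "E 0 = Im (pdiff i f x)"
    by (simp_all add: A_def B_def C_def E_def)
  have nz1: "Nn x + 2 * 0 * x $ i + 0\<^sup>2 \<noteq> 0" and nz2: "(Nn x + 2 * 0 * x $ i + 0\<^sup>2)\<^sup>2 \<noteq> 0"
    using n0 by simp_all
  show ?thesis
    unfolding eqf
    apply (rule derivative_eq_intros dA dB dC dE refl nz1 nz2)+
    using n0 apply (simp_all add: A0)
    apply (simp add: Df_def Fq_def Pq_def)
    apply (rule alg1)
    by assumption
qed


lemma Nn_sum: "Nn x = (x$1)\<^sup>2 + (x$2)\<^sup>2 + (x$3)\<^sup>2"
  unfolding Nn_def power2_norm_eq_inner inner_vec_def sum_3 by (simp add: power2_eq_square)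

lemma Df_split:
  assumes n: "Nn x > 0"
  shows "Df f i x = - (1/2) * Fq f x / (Nn x)\<^sup>2 + (9/4) * (x$i)\<^sup>2 * Fq f x / (Nn x)^3
     - (Re (f x) * Re (pdiff i (pdiff i f) x) + Im (f x) * Im (pdiff i (pdiff i f) x)) / Nn x
     - ((Re (pdiff i f x) - x$i * Re (f x) / (2 * Nn x))\<^sup>2 + (Im (pdiff i f x) - x$i * Im (f x) / (2 * Nn x))\<^sup>2) / Nn x"
proof -
  have "Nn x \<noteq> 0" using n by simp
  then show ?thesis unfolding Df_def Fq_def Pq_def by (simp add: field_simps) algebra
qed

lemma Re_cnj_div: "Re (cnj (z / complex_of_real n) * w) = (Re z * Re w + Im z * Im w) / n"
  by (cases "n = 0") (simp_all add: Re_divide Im_divide field_simps power2_eq_square)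

lemma pointwise:
  assumes "chi (norm x) \<ge> c"
  shows "Re (cnj (f x / complex_of_real (Nn x)) * A0 chi f x) \<ge>
         (c - 3/4) * Fq f x / (Nn x)\<^sup>2 + (\<Sum>i\<in>UNIV. Df f i x)"
proof (cases "x = 0")
  case True
  then show ?thesis by (simp add: Nn_def Df_def)
next
  case False
  define n where "n = Nn x"
  have n: "n > 0" using False unfolding n_def Nn_def by simp
  define F where "F = Fq f x"
  have F: "F \<ge> 0" unfolding F_def Fq_def by simp
  define R where "R i = Re (f x) * Re (pdiff i (pdiff i f) x) + Im (f x) * Im (pdiff i (pdiff i f) x)" for i
  define S where "S i = ((Re (pdiff i f x) - x$i * Re (f x) / (2 * Nn x))\<^sup>2 + (Im (pdiff i f x) - x$i * Im (f x) / (2 * Nn x))\<^sup>2)" for i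
  have S: "S i / n \<ge> 0" for i using n unfolding S_def by simp
  have D: "Df f i x = - (1/2) * F / n\<^sup>2 + (9/4) * (x$i)\<^sup>2 * F / n^3 - R i / n - S i / n" for i
    using Df_split[of x f i] n unfolding n_def F_def R_def S_def by simp
  have nsum: "n = (x$1)\<^sup>2 + (x$2)\<^sup>2 + (x$3)\<^sup>2" unfolding n_def by (rule Nn_sum)
  have "(\<Sum>i\<in>UNIV. Df f i x) \<le> (- (1/2) * F / n\<^sup>2 + (9/4) * (x$1)\<^sup>2 * F / n^3 - R 1 / n)
     + (- (1/2) * F / n\<^sup>2 + (9/4) * (x$2)\<^sup>2 * F / n^3 - R 2 / n)
     + (- (1/2) * F / n\<^sup>2 + (9/4) * (x$3)\<^sup>2 * F / n^3 - R 3 / n)"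
    unfolding sum_3 D using S[of 1] S[of 2] S[of 3] by linarith
  also have "\<dots> = (3/4) * F / n\<^sup>2 - (R 1 + R 2 + R 3) / n"
  proof -
    have "(9/4) * (x$1)\<^sup>2 * F / n^3 + (9/4) * (x$2)\<^sup>2 * F / n^3 + (9/4) * (x$3)\<^sup>2 * F / n^3
        = (9/4) * F / n\<^sup>2"
    proof -
      have "(9/4) * (x$1)\<^sup>2 * F / n^3 + (9/4) * (x$2)\<^sup>2 * F / n^3 + (9/4) * (x$3)\<^sup>2 * F / n^3
          = (9/4) * F * ((x$1)\<^sup>2 + (x$2)\<^sup>2 + (x$3)\<^sup>2) / n^3" by (simp add: add_divide_distrib algebra_simps)
      also have "\<dots> = (9/4) * F * n / (n * n\<^sup>2)" unfolding nsum[symmetric] by (simp add: power3_eq_cube power2_eq_square)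
      also have "\<dots> = (9/4) * F / n\<^sup>2" using n by simp
      finally show ?thesis .
    qed
    then show ?thesis by (simp add: field_simps add_divide_distrib)
  qed
  finally have sD: "(\<Sum>i\<in>UNIV. Df f i x) \<le> (3/4) * F / n\<^sup>2 - (R 1 + R 2 + R 3) / n" .
  have Aeq: "A0 chi f x = - (\<Sum>i\<in>UNIV. pdiff i (pdiff i f) x) + complex_of_real (chi (norm x) / n) * f x"
    unfolding A0_def laplacian_def n_def Nn_def by simp
  have L: "Re (cnj (f x / complex_of_real (Nn x)) * A0 chi f x) = - (R 1 + R 2 + R 3) / n + chi (norm x) * F / n\<^sup>2"
    unfolding Re_cnj_div Aeq n_def[symmetric] R_def F_def Fq_def
    using n by (simp add: sum_3 field_simps power2_eq_square)
  have "chi (norm x) * F / n\<^sup>2 \<ge> c * F / n\<^sup>2"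
    using assms F n by (simp add: divide_right_mono mult_right_mono)
  moreover have "(c - 3/4) * Fq f x / (Nn x)\<^sup>2 = c * F / n\<^sup>2 - (3/4) * F / n\<^sup>2"
    unfolding F_def n_def by (simp add: diff_divide_distrib left_diff_distrib)
  ultimately show ?thesis using L sD by linarith
qed


lemma cont_glue:
  fixes h :: "R3 \<Rightarrow> 'b::topological_space"
  assumes "continuous_on (-{0}) h" "\<delta> > 0" "\<And>y. y \<in> ball 0 \<delta> \<Longrightarrow> h y = z"
  shows "continuous_on UNIV h"
proof -
  have "continuous_on (ball 0 \<delta>) h"
    using continuous_on_cong[of "ball 0 \<delta>" "ball 0 \<delta>" h "\<lambda>_. z"] assms(3) by auto
  then have "continuous_on (-{0} \<union> ball 0 \<delta>) h"
    by (intro continuous_on_open_Un assms(1)) auto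
  moreover have "-{0} \<union> ball 0 \<delta> = UNIV" using assms(2) by auto
  ultimately show ?thesis by metis
qed

lemma out_cbox: "y \<notin> cbox (- R *\<^sub>R One) (R *\<^sub>R One) \<Longrightarrow> norm y > (R::real)"
  using norm_le_cbox[of y R] by force

lemma out_cbox': "y \<notin> cbox (- (R *\<^sub>R One)) (R *\<^sub>R One) \<Longrightarrow> norm y > (R::real)"
  using out_cbox[of y R] by simp

lemma TI:
  fixes f :: "R3 \<Rightarrow> complex" and chi :: "real \<Rightarrow> real"
  assumes tf: "test_fun f" and cchi: "continuous_on {0..} chi"
    and lb: "\<And>x::R3. chi (norm x) \<ge> c" and d: "c - 3/4 > 0"
  shows "integrable lborel (\<lambda>x. (norm (f x / complex_of_real ((norm x)\<^sup>2)))\<^sup>2) \<and>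
         (c - 3/4)\<^sup>2 * integral\<^sup>L lborel (\<lambda>x. (norm (f x / complex_of_real ((norm x)\<^sup>2)))\<^sup>2)
         \<le> integral\<^sup>L lborel (\<lambda>x. (norm (A0 chi f x))\<^sup>2)"
proof -
  define dd where "dd = c - 3/4"
  have dd: "dd > 0" using d unfolding dd_def .
  obtain K where K: "compact K" "0 \<notin> K" "\<And>x. x \<notin> K \<Longrightarrow> f x = 0"
    using tf unfolding test_fun_def by blast
  define U where "U = - K"
  have oU: "open U" unfolding U_def using K(1) by (simp add: compact_imp_closed open_Compl)
  have U0: "0 \<in> U" unfolding U_def using K(2) by simp
  obtain \<delta> where \<delta>: "\<delta> > 0" "ball 0 \<delta> \<subseteq> U" using oU U0 open_contains_ball by blast
  obtain R where R: "\<And>x. x \<in> K \<Longrightarrow> norm x \<le> R"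
    using compact_imp_bounded[OF K(1)] bounded_iff by blast
  have fU: "f y = 0" if "y \<in> U" for y using K(3) that unfolding U_def by simp
  have pU: "pdiff i f y = 0" if "y \<in> U" for y i by (rule pdiff_zero_open[OF oU that fU])
  have qU: "pdiff i (pdiff i f) y = 0" if "y \<in> U" for y i by (rule pdiff_zero_open[OF oU that pU])
  have outR: "y \<in> U" if "norm y > R" for y using R that unfolding U_def by force
  have ball: "y \<in> U" if "y \<in> ball 0 \<delta>" for y using \<delta> that by auto
  have cf: "continuous_on UNIV f"
    by (intro continuous_at_imp_continuous_on ballI differentiable_imp_continuous_within test_fun_diff[OF tf])
  have cp: "continuous_on UNIV (pdiff i f)" for i
    by (intro continuous_at_imp_continuous_on ballI differentiable_imp_continuous_within test_fun_diff[OF tf])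
  have cq: "continuous_on UNIV (pdiff i (pdiff i f))" for i
    by (intro continuous_at_imp_continuous_on ballI differentiable_imp_continuous_within test_fun_diff[OF tf])
  have cN: "continuous_on S Nn" for S unfolding Nn_def by (intro continuous_intros)
  have N0: "Nn y \<noteq> 0" if "y \<in> -{0}" for y using that unfolding Nn_def by simp
  have cD: "continuous_on UNIV (Df f i)" for i
    proof (rule cont_glue[OF _ \<delta>(1)])
      show "continuous_on (- {0}) (Df f i)"
        unfolding Df_def Fq_def Pq_def
        by (intro continuous_intros continuous_on_subset[OF cf] continuous_on_subset[OF cp]
            continuous_on_subset[OF cq] cN) (auto simp: N0)
      show "Df f i y = 0" if "y \<in> ball 0 \<delta>" for y
        using ball[OF that] fU pU qU unfolding Df_def Fq_def Pq_def by simp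
    qed
  have sD: "Df f i y = 0" if "norm y > R" for y i
      using outR[OF that] fU pU qU unfolding Df_def Fq_def Pq_def by simp
  have intD: "integral\<^sup>L lborel (Df f i) = 0" for i
  proof (rule IL)
    show "continuous_on UNIV (Df f i)" by (rule cD)
    show "continuous_on UNIV (Gf f i)"
    proof (rule cont_glue[OF _ \<delta>(1)])
      show "continuous_on (- {0}) (Gf f i)"
        unfolding Gf_def Fq_def Pq_def
        by (intro continuous_intros continuous_on_subset[OF cf] continuous_on_subset[OF cp] cN) (auto simp: N0)
      show "Gf f i y = 0" if "y \<in> ball 0 \<delta>" for y
        using ball[OF that] fU pU unfolding Gf_def Fq_def Pq_def by simp
    qed
    show "Df f i y = 0" if "norm y > R" for y
      using outR[OF that] fU pU qU unfolding Df_def Fq_def Pq_def by simp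
    show "Gf f i y = 0" if "norm y > R" for y
      using outR[OF that] fU pU unfolding Gf_def Fq_def Pq_def by simp
    show "((\<lambda>t. Gf f i (y + t *\<^sub>R axis i 1)) has_real_derivative Df f i y) (at 0)" for y
    proof (cases "y = 0")
      case False
      then show ?thesis by (rule G_deriv) (use test_fun_diff[OF tf] in auto)
    next
      case True
      have d0: "((\<lambda>t. 0) has_real_derivative 0) (at (0::real))" by simp
      have eq0: "0 = Gf f i (y + t *\<^sub>R axis i 1)" if "t \<in> ball 0 \<delta>" for t
      proof -
        have "y + t *\<^sub>R axis i 1 \<in> ball 0 \<delta>" using that True by simp
        then show ?thesis using ball fU pU unfolding Gf_def Fq_def Pq_def by simp
      qed
      have "((\<lambda>t. Gf f i (y + t *\<^sub>R axis i 1)) has_real_derivative 0) (at 0)"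
        by (rule has_field_derivative_transform_within_open[OF d0, where S="ball 0 \<delta>"]) (use \<delta> eq0 in auto)
      moreover have "Df f i y = 0" using True by (simp add: Df_def Nn_def)
      ultimately show ?thesis by simp
    qed
  qed
  define W where "W x = f x / complex_of_real ((norm x)\<^sup>2)" for x
  define L where "L x = Re (cnj (W x) * A0 chi f x)" for x
  define Q where "Q x = (norm (W x))\<^sup>2" for x
  define M where "M x = (norm (A0 chi f x))\<^sup>2" for x
  have cW: "continuous_on UNIV W"
  proof (rule cont_glue[OF _ \<delta>(1)])
    show "continuous_on (- {0}) W"
      unfolding W_def by (intro continuous_intros continuous_on_subset[OF cf]) auto
    show "W y = 0" if "y \<in> ball 0 \<delta>" for y using ball[OF that] fU unfolding W_def by simp
  qed
  have cchi': "continuous_on (-{0}) (\<lambda>x::R3. chi (norm x))"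
    by (rule continuous_on_compose2[OF cchi]) (auto intro!: continuous_intros)
  have cA: "continuous_on UNIV (A0 chi f)"
  proof (rule cont_glue[OF _ \<delta>(1)])
    show "continuous_on (- {0}) (A0 chi f)"
      unfolding A0_def laplacian_def
      by (intro continuous_intros continuous_on_subset[OF cf] continuous_on_subset[OF cq] cchi') auto
    show "A0 chi f y = 0" if "y \<in> ball 0 \<delta>" for y using ball[OF that] fU qU unfolding A0_def laplacian_def by simp
  qed
  have sW: "W y = 0" if "norm y > R" for y using outR[OF that] fU unfolding W_def by simp
  have sA: "A0 chi f y = 0" if "norm y > R" for y using outR[OF that] fU qU unfolding A0_def laplacian_def by simp
  define Bx where "Bx = cbox (- R *\<^sub>R One) (R *\<^sub>R (One::R3))"
  have iL: "integrable lborel L" unfolding L_def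
    by (rule cs_integrable[of _ "- R *\<^sub>R One" "R *\<^sub>R One"]) (auto intro!: continuous_intros cW cA dest!: out_cbox out_cbox' simp: sW)
  have iQ: "integrable lborel Q" unfolding Q_def
    by (rule cs_integrable[of _ "- R *\<^sub>R One" "R *\<^sub>R One"]) (auto intro!: continuous_intros cW dest!: out_cbox out_cbox' simp: sW)
  have iM: "integrable lborel M" unfolding M_def
    by (rule cs_integrable[of _ "- R *\<^sub>R One" "R *\<^sub>R One"]) (auto intro!: continuous_intros cA dest!: out_cbox out_cbox' simp: sA)
  have iD: "integrable lborel (Df f i)" for i
    by (rule cs_integrable[of _ "- R *\<^sub>R One" "R *\<^sub>R One"]) (auto intro!: cD dest!: out_cbox out_cbox' simp: sD)
  have FQ: "Fq f x / (Nn x)\<^sup>2 = Q x" for x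
    unfolding Fq_def Nn_def Q_def W_def norm_divide by (simp add: cmod_power2 power_divide)
  have pw: "dd * Q x + (\<Sum>i\<in>UNIV. Df f i x) \<le> L x" for x
  proof -
    have "(c - 3/4) * Fq f x / (Nn x)\<^sup>2 = dd * Q x" using FQ[of x] unfolding dd_def by (metis times_divide_eq_right)
    then show ?thesis using pointwise[of c chi x f, OF lb] unfolding L_def W_def Nn_def by simp
  qed
  have "integral\<^sup>L lborel (\<lambda>x. dd * Q x + (\<Sum>i\<in>UNIV. Df f i x)) \<le> integral\<^sup>L lborel L"
    by (rule integral_mono) (use pw iL iQ iD in auto)
  moreover have "integral\<^sup>L lborel (\<lambda>x. dd * Q x + (\<Sum>i\<in>UNIV. Df f i x)) = dd * integral\<^sup>L lborel Q"
    using iQ iD intD by (simp add: integral_sum)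
  ultimately have low: "dd * integral\<^sup>L lborel Q \<le> integral\<^sup>L lborel L" by simp
  have pw2: "L x \<le> (dd/2) * Q x + (1/(2*dd)) * M x" for x
  proof -
    have "L x \<le> norm (cnj (W x) * A0 chi f x)" unfolding L_def by (rule complex_Re_le_cmod)
    also have "\<dots> = norm (W x) * norm (A0 chi f x)" by (simp add: norm_mult)
    also have "\<dots> \<le> (dd/2) * Q x + (1/(2*dd)) * M x"
    proof -
      have "0 \<le> (dd * norm (W x) - norm (A0 chi f x))\<^sup>2 / (2 * dd)" using dd by simp
      then show ?thesis unfolding Q_def M_def using dd
        by (simp add: field_simps power2_eq_square)
    qed
    finally show ?thesis .
  qed
  have "integral\<^sup>L lborel L \<le> integral\<^sup>L lborel (\<lambda>x. (dd/2) * Q x + (1/(2*dd)) * M x)"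
    by (rule integral_mono) (use pw2 iL iQ iM in auto)
  also have "\<dots> = (dd/2) * integral\<^sup>L lborel Q + (1/(2*dd)) * integral\<^sup>L lborel M"
    using iQ iM by simp
  finally have up: "integral\<^sup>L lborel L \<le> (dd/2) * integral\<^sup>L lborel Q + (1/(2*dd)) * integral\<^sup>L lborel M" .
  have "(dd/2) * integral\<^sup>L lborel Q \<le> (1/(2*dd)) * integral\<^sup>L lborel M" using low up by simp
  then have "dd * (dd * integral\<^sup>L lborel Q) \<le> integral\<^sup>L lborel M" using dd by (simp add: field_simps)
  then show ?thesis using iQ unfolding dd_def[symmetric] Q_def[abs_def] W_def M_def[abs_def]
    by (simp add: power2_eq_square mult.assoc)
qed



lemma sq_sum_le: "((a::real) + b)\<^sup>2 \<le> 2 * a\<^sup>2 + 2 * b\<^sup>2"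
proof -
  have "0 \<le> (a - b)\<^sup>2" by simp
  then show ?thesis by (simp add: power2_eq_square algebra_simps)
qed

lemma L2conv_facts:
  assumes "L2conv fs f"
  shows "f \<in> borel_measurable lborel" "integrable lborel (\<lambda>x. (norm (f x))\<^sup>2)"
    "\<And>k. fs k \<in> borel_measurable lborel" "\<And>k. integrable lborel (\<lambda>x. (norm (fs k x))\<^sup>2)"
    "\<And>k. integrable lborel (\<lambda>x. (norm (fs k x - f x))\<^sup>2)"
    "(\<lambda>k. integral\<^sup>L lborel (\<lambda>x. (norm (fs k x - f x))\<^sup>2)) \<longlonglongrightarrow> 0"
proof -
  show mf: "f \<in> borel_measurable lborel" and if': "integrable lborel (\<lambda>x. (norm (f x))\<^sup>2)"
    using assms unfolding L2conv_def memL2_def by auto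
  show mfs: "fs k \<in> borel_measurable lborel" and ifs: "integrable lborel (\<lambda>x. (norm (fs k x))\<^sup>2)" for k
    using assms unfolding L2conv_def memL2_def by auto
  show idf: "integrable lborel (\<lambda>x. (norm (fs k x - f x))\<^sup>2)" for k
  proof (rule Bochner_Integration.integrable_bound[where f="\<lambda>x. 2 * (norm (fs k x))\<^sup>2 + 2 * (norm (f x))\<^sup>2"])
    show "integrable lborel (\<lambda>x. 2 * (norm (fs k x))\<^sup>2 + 2 * (norm (f x))\<^sup>2)"
      using ifs[of k] if' by simp
    show "(\<lambda>x. (norm (fs k x - f x))\<^sup>2) \<in> borel_measurable lborel"
      using mf mfs[of k] by measurable
    show "AE x in lborel. norm ((norm (fs k x - f x))\<^sup>2) \<le> norm (2 * (norm (fs k x))\<^sup>2 + 2 * (norm (f x))\<^sup>2)"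
    proof (rule AE_I2)
      fix x
      have "norm (fs k x - f x) \<le> norm (fs k x) + norm (f x)" by (rule norm_triangle_ineq4)
      then have "(norm (fs k x - f x))\<^sup>2 \<le> (norm (fs k x) + norm (f x))\<^sup>2"
        by (simp add: power_mono)
      also have "\<dots> \<le> 2 * (norm (fs k x))\<^sup>2 + 2 * (norm (f x))\<^sup>2"
        by (rule sq_sum_le)
      finally show "norm ((norm (fs k x - f x))\<^sup>2) \<le> norm (2 * (norm (fs k x))\<^sup>2 + 2 * (norm (f x))\<^sup>2)"
        by simp
    qed
  qed
  have "(\<lambda>k. L2norm (\<lambda>x. fs k x - f x)) \<longlonglongrightarrow> 0" using assms unfolding L2conv_def by auto
  then have "(\<lambda>k. (L2norm (\<lambda>x. fs k x - f x))\<^sup>2) \<longlonglongrightarrow> 0\<^sup>2" by (intro tendsto_intros)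
  moreover have "(L2norm (\<lambda>x. fs k x - f x))\<^sup>2 = integral\<^sup>L lborel (\<lambda>x. (norm (fs k x - f x))\<^sup>2)" for k
    unfolding L2norm_def by (simp add: integral_nonneg_AE)
  ultimately show "(\<lambda>k. integral\<^sup>L lborel (\<lambda>x. (norm (fs k x - f x))\<^sup>2)) \<longlonglongrightarrow> 0" by simp
qed



lemma sq_eps: 
  fixes a b e :: real assumes "e > 0"
  shows "(a + b)\<^sup>2 \<le> (1 + e) * a\<^sup>2 + (1 + 1/e) * b\<^sup>2"
proof -
  have "0 \<le> (e * a - b)\<^sup>2 / e" using assms by simp
  then show ?thesis using assms by (simp add: field_simps power2_eq_square)
qed

lemma norm_sq_eps:
  fixes a b :: complex and e :: real assumes "e > 0"
  shows "(norm a)\<^sup>2 \<le> (1 + e) * (norm b)\<^sup>2 + (1 + 1/e) * (norm (a - b))\<^sup>2"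
proof -
  have "norm a \<le> norm b + norm (a - b)" by (metis add.commute diff_add_cancel norm_triangle_ineq)
  then have "(norm a)\<^sup>2 \<le> (norm b + norm (a - b))\<^sup>2" by (simp add: power_mono)
  also have "\<dots> \<le> (1 + e) * (norm b)\<^sup>2 + (1 + 1/e) * (norm (a - b))\<^sup>2" by (rule sq_eps[OF assms])
  finally show ?thesis .
qed

theorem mainTheorem5:
  fixes chi :: "real \<Rightarrow> real" and c :: real
  assumes "continuous_on {0..} chi"
    and "chi C1_differentiable_on {0<..}"
    and "antimono_on {0..} chi"
    and "bounded (chi ` {0..})"
    and "c = Inf (chi ` {0..})"
    and "c > 3/4"
    and "A0_closure_graph chi u g"
  shows "memL2 (\<lambda>x. u x / complex_of_real ((norm x)\<^sup>2)) \<and>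
         (c - 3/4) * L2norm (\<lambda>x. u x / complex_of_real ((norm x)\<^sup>2)) \<le> L2norm g"
proof -
  define d where "d = c - 3/4"
  have d: "d > 0" using assms(6) unfolding d_def by simp
  have lb: "chi (norm x) \<ge> c" for x :: R3
    unfolding assms(5) by (rule cInf_lower) (auto intro: bounded_imp_bdd_below[OF assms(4)])
  obtain us where us: "\<And>k. test_fun (us k)" "L2conv us u" "L2conv (\<lambda>k. A0 chi (us k)) g"
    using assms(7) unfolding A0_closure_graph_def by blast
  note U = L2conv_facts[OF us(2)]
  note G = L2conv_facts[OF us(3)]
  define h where "h k x = (norm (us k x / complex_of_real ((norm x)\<^sup>2)))\<^sup>2" for k x
  define H where "H x = (norm (u x / complex_of_real ((norm x)\<^sup>2)))\<^sup>2" for x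
  define Gi where "Gi = integral\<^sup>L lborel (\<lambda>x. (norm (g x))\<^sup>2)"
  define E where "E k = integral\<^sup>L lborel (\<lambda>x. (norm (A0 chi (us k) x - g x))\<^sup>2)" for k
  have Gi0: "Gi \<ge> 0" unfolding Gi_def by simp
  have TIk: "integrable lborel (h k) \<and> d\<^sup>2 * integral\<^sup>L lborel (h k) \<le> integral\<^sup>L lborel (\<lambda>x. (norm (A0 chi (us k) x))\<^sup>2)" for k
    unfolding h_def[abs_def] d_def using TI[OF us(1) assms(1) lb] assms(6) by simp
  have mH: "H \<in> borel_measurable lborel" unfolding H_def using U(1) by measurable
  have mh: "h k \<in> borel_measurable lborel" for k unfolding h_def using U(3) by measurable
  have bound: "\<forall>\<^sub>F k in sequentially. integral\<^sup>L lborel (h k) \<le> (Gi + e * (Gi + 1)) / d\<^sup>2" if e: "e > 0" for e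
  proof -
    have "(\<lambda>k. (1 + 1/e) * E k) \<longlonglongrightarrow> (1 + 1/e) * 0"
      unfolding E_def by (intro tendsto_intros G(6))
    then have "\<forall>\<^sub>F k in sequentially. (1 + 1/e) * E k < e" using e by (simp add: order_tendstoD(2))
    then show ?thesis
    proof (rule eventually_mono)
      fix k assume k: "(1 + 1/e) * E k < e"
      have "integral\<^sup>L lborel (\<lambda>x. (norm (A0 chi (us k) x))\<^sup>2)
          \<le> integral\<^sup>L lborel (\<lambda>x. (1 + e) * (norm (g x))\<^sup>2 + (1 + 1/e) * (norm (A0 chi (us k) x - g x))\<^sup>2)"
        by (rule integral_mono) (use G(2) G(4) G(5) norm_sq_eps[OF e] in auto)
      also have "\<dots> = (1 + e) * Gi + (1 + 1/e) * E k"
        unfolding Gi_def E_def using G(2) G(5) by simp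
      also have "\<dots> \<le> Gi + e * (Gi + 1)" using k by (simp add: algebra_simps)
      finally have "d\<^sup>2 * integral\<^sup>L lborel (h k) \<le> Gi + e * (Gi + 1)" using TIk[of k] by linarith
      then show "integral\<^sup>L lborel (h k) \<le> (Gi + e * (Gi + 1)) / d\<^sup>2" using d by (simp add: field_simps)
    qed
  qed
  obtain r :: "nat \<Rightarrow> nat" where r: "strict_mono r"
    and ae: "AE x in lborel. (\<lambda>n. (norm (us (r n) x - u x))\<^sup>2) \<longlonglongrightarrow> 0"
  proof -
    have "\<exists>r::nat\<Rightarrow>nat. strict_mono r \<and> (AE x in lborel. (\<lambda>n. (norm (us (r n) x - u x))\<^sup>2) \<longlonglongrightarrow> 0)"
      by (rule tendsto_L1_AE_subseq) (use U(5) U(6) in auto)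
    then show ?thesis using that by blast
  qed
  have aeH: "AE x in lborel. (\<lambda>n. h (r n) x) \<longlonglongrightarrow> H x"
    using ae
  proof (rule AE_mp, intro AE_I2 impI)
    fix x assume "(\<lambda>n. (norm (us (r n) x - u x))\<^sup>2) \<longlonglongrightarrow> 0"
    then have "(\<lambda>n. sqrt ((norm (us (r n) x - u x))\<^sup>2)) \<longlonglongrightarrow> sqrt 0" by (intro tendsto_intros)
    then have "(\<lambda>n. norm (us (r n) x - u x)) \<longlonglongrightarrow> 0" by simp
    then have "(\<lambda>n. us (r n) x - u x) \<longlonglongrightarrow> 0" by (simp add: tendsto_norm_zero_iff)
    then have "(\<lambda>n. (us (r n) x - u x) + u x) \<longlonglongrightarrow> 0 + u x" by (intro tendsto_intros)
    then have "(\<lambda>n. us (r n) x) \<longlonglongrightarrow> u x" by simp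
    then have "(\<lambda>n. us (r n) x * inverse (complex_of_real ((norm x)\<^sup>2))) \<longlonglongrightarrow> u x * inverse (complex_of_real ((norm x)\<^sup>2))"
      by (intro tendsto_intros)
    then have "(\<lambda>n. (norm (us (r n) x * inverse (complex_of_real ((norm x)\<^sup>2))))\<^sup>2) \<longlonglongrightarrow> (norm (u x * inverse (complex_of_real ((norm x)\<^sup>2))))\<^sup>2"
      by (rule tendsto_power[OF tendsto_norm])
    then show "(\<lambda>n. h (r n) x) \<longlonglongrightarrow> H x" unfolding h_def H_def by (simp add: divide_inverse)
  qed
  have fatou: "(\<integral>\<^sup>+ x. ennreal (H x) \<partial>lborel) \<le> ennreal ((Gi + e * (Gi + 1)) / d\<^sup>2)" if e: "e > 0" for e
  proof -
    have "(\<integral>\<^sup>+ x. ennreal (H x) \<partial>lborel) = (\<integral>\<^sup>+ x. liminf (\<lambda>n. ennreal (h (r n) x)) \<partial>lborel)"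
    proof (rule nn_integral_cong_AE)
      show "AE x in lborel. ennreal (H x) = liminf (\<lambda>n. ennreal (h (r n) x))"
        using aeH
      proof (rule AE_mp, intro AE_I2 impI)
        fix x assume "(\<lambda>n. h (r n) x) \<longlonglongrightarrow> H x"
        then have "(\<lambda>n. ennreal (h (r n) x)) \<longlonglongrightarrow> ennreal (H x)" by (rule tendsto_ennrealI)
        then show "ennreal (H x) = liminf (\<lambda>n. ennreal (h (r n) x))"
          by (simp add: lim_imp_Liminf)
      qed
    qed
    also have "\<dots> \<le> liminf (\<lambda>n. \<integral>\<^sup>+ x. ennreal (h (r n) x) \<partial>lborel)"
      by (rule nn_integral_liminf) (use mh in measurable)
    also have "\<dots> = liminf (\<lambda>n. ennreal (integral\<^sup>L lborel (h (r n))))"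
    proof -
      have "(\<integral>\<^sup>+ x. ennreal (h (r n) x) \<partial>lborel) = ennreal (integral\<^sup>L lborel (h (r n)))" for n
        by (rule nn_integral_eq_integral[OF conjunct1[OF TIk[of "r n"]]]) (simp add: h_def)
      then show ?thesis by simp
    qed
    also have "\<dots> \<le> ennreal ((Gi + e * (Gi + 1)) / d\<^sup>2)"
    proof (rule Liminf_le)
      show "(sequentially :: nat filter) \<noteq> bot" by simp
      obtain N where N: "\<And>k. k \<ge> N \<Longrightarrow> integral\<^sup>L lborel (h k) \<le> (Gi + e * (Gi + 1)) / d\<^sup>2"
        using bound[OF e] unfolding eventually_sequentially by blast
      show "\<forall>\<^sub>F n in sequentially. ennreal (integral\<^sup>L lborel (h (r n))) \<le> ennreal ((Gi + e * (Gi + 1)) / d\<^sup>2)"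
        unfolding eventually_sequentially
      proof (intro exI allI impI)
        fix n assume "n \<ge> N"
        then have "r n \<ge> N" using seq_suble[OF r, of n] by linarith
        then show "ennreal (integral\<^sup>L lborel (h (r n))) \<le> ennreal ((Gi + e * (Gi + 1)) / d\<^sup>2)"
          using N by (simp add: ennreal_leI)
      qed
    qed
    finally show ?thesis .
  qed
  have H0: "H x \<ge> 0" for x unfolding H_def by simp
  have iH: "integrable lborel H"
  proof (rule integrableI_nonneg[OF mH])
    show "AE x in lborel. 0 \<le> H x" using H0 by simp
    show "(\<integral>\<^sup>+ x. ennreal (H x) \<partial>lborel) < \<infinity>"
      using fatou[of 1] le_less_trans[OF _ ennreal_less_top] by simp
  qed
  have intH: "integral\<^sup>L lborel H \<le> Gi / d\<^sup>2"
  proof (rule field_le_epsilon)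
    fix e :: real assume e: "e > 0"
    define e' where "e' = e * d\<^sup>2 / (Gi + 1)"
    have e': "e' > 0" unfolding e'_def using e d Gi0 by simp
    have "ennreal (integral\<^sup>L lborel H) \<le> ennreal ((Gi + e' * (Gi + 1)) / d\<^sup>2)"
      using fatou[OF e'] nn_integral_eq_integral[OF iH] H0 by simp
    then have "integral\<^sup>L lborel H \<le> (Gi + e' * (Gi + 1)) / d\<^sup>2"
      using e' d Gi0 by (subst (asm) ennreal_le_iff) (auto intro: divide_nonneg_pos)
    also have "\<dots> = Gi / d\<^sup>2 + e"
    proof -
      have "e' * (Gi + 1) = e * d\<^sup>2" unfolding e'_def using Gi0 by simp
      then show ?thesis using d by (simp add: add_divide_distrib)
    qed
    finally show "integral\<^sup>L lborel H \<le> Gi / d\<^sup>2 + e" .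
  qed
  have memL2: "memL2 (\<lambda>x. u x / complex_of_real ((norm x)\<^sup>2))"
  proof -
    have "(\<lambda>x. u x / complex_of_real ((norm x)\<^sup>2)) \<in> borel_measurable lborel" using U(1) by measurable
    then show ?thesis unfolding memL2_def using iH unfolding H_def[abs_def] by simp
  qed
  have "L2norm (\<lambda>x. u x / complex_of_real ((norm x)\<^sup>2)) = sqrt (integral\<^sup>L lborel H)"
    unfolding L2norm_def H_def ..
  also have "\<dots> \<le> sqrt (Gi / d\<^sup>2)" using intH by simp
  also have "\<dots> = sqrt Gi / d" using d by (simp add: real_sqrt_divide)
  finally have "d * L2norm (\<lambda>x. u x / complex_of_real ((norm x)\<^sup>2)) \<le> sqrt Gi" using d by (simp add: field_simps)
  moreover have "L2norm g = sqrt Gi" unfolding L2norm_def Gi_def ..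
  ultimately show ?thesis using memL2 unfolding d_def by simp
qed

end
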